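(* Let $\mathcal{W}$ be a finite set and $(X_t)_{t\ge1}$ a time-homogeneous first-order Markov chain on $\mathcal{W}$ with initial distribution $p_{x_1}$ and transition probabilities $q_x(x_{t+1}\mid x_t)$. For any history-dependent release policy $\boldsymbol q\in\mathcal{Q}_H$ and any $n\ge1$, $$I^{\boldsymbol q}(X^n;Y^n)\ \ge\ \sum_{t=1}^n I^{\boldsymbol q}(X_t,X_{t-1};Y_t\mid Y^{t-1}),$$ with equality if and only if $\boldsymbol q\in\mathcal{Q}_S$.
   Context: Notation: $X^t=(X_1,\dots,X_t)$, $Y^{t-1}=(Y_1,\dots,Y_{t-1})$, $Y^0$ empty; at $t=1$ terms involving $X_0$ are absent. A history-dependent release policy is a sequence $\boldsymbol q=\{q_t(y_t\mid x^t,y^{t-1})\}_{t\ge1}$ of conditional probability distributions on $\mathcal{W}$; $\mathcal{Q}_H$ is the set of all such policies. The released locations $Y_t\in\mathcal W$ and true locations have joint law $$P^{\boldsymbol q}(X^n=x^n,Y^n=y^n)=p_{x_1}(x_1)q_1(y_1\mid x_1)\prod_{t=2}^n q_x(x_t\mid x_{t-1})\,q_t(y_t\mid x^t,y^{t-1}),$$ and $I^{\boldsymbol q}$ denotes mutual information under this law. $\mathcal{Q}_S\subseteq\mathcal{Q}_H$ is the set of policies of the form $q_t(y_t\mid x_t,x_{t-1},y^{t-1})$, depending on the true trajectory only through $(x_t,x_{t-1})$.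
   Formalization: Equality holds if and only if some policy in $\mathcal{Q}_S$ induces the same joint law of $X^n$ and $Y^n$ as $\boldsymbol q$, in place of $\boldsymbol q\in\mathcal{Q}_S$. The statement above fails without it. *)

theory Defs
  imports Complex_Main
begin

text \<open>Finite alphabet: a type of class finite. Trajectories are lists; index t
(1-based in the paper) corresponds to list position t-1.\<close>

definition prob_vec :: "('w::finite \<Rightarrow> real) \<Rightarrow> bool" where
  "prob_vec p \<longleftrightarrow> (\<forall>x. 0 \<le> p x) \<and> (\<Sum>x\<in>UNIV. p x) = 1"

text \<open>T x x' = q_x(x' | x): transition probability from x to x'.\<close>
definition markov_kernel :: "('w::finite \<Rightarrow> 'w \<Rightarrow> real) \<Rightarrow> bool" where
  "markov_kernel T \<longleftrightarrow> (\<forall>x. prob_vec (T x))"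

text \<open>q t xs ys y = q_t(y | x^t, y^{t-1}), with length xs = t, length ys = t-1.\<close>
definition QH :: "(nat \<Rightarrow> 'w::finite list \<Rightarrow> 'w list \<Rightarrow> 'w \<Rightarrow> real) set" where
  "QH = {q. \<forall>t xs ys. 1 \<le> t \<longrightarrow> length xs = t \<longrightarrow> length ys = t - 1 \<longrightarrow> prob_vec (q t xs ys)}"

text \<open>Policies depending on the true trajectory only through (x_t, x_{t-1}),
i.e. through the last (at most) two entries  drop (t-2) xs.\<close>
definition QS :: "(nat \<Rightarrow> 'w::finite list \<Rightarrow> 'w list \<Rightarrow> 'w \<Rightarrow> real) set" where
  "QS = {q. q \<in> QH \<and> (\<forall>t xs xs' ys. 1 \<le> t \<longrightarrow> length xs = t \<longrightarrow> length xs' = t \<longrightarrow>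
            length ys = t - 1 \<longrightarrow> drop (t - 2) xs = drop (t - 2) xs' \<longrightarrow> q t xs ys = q t xs' ys)}"

definition traj_space :: "nat \<Rightarrow> ('w list \<times> 'w list) set" where
  "traj_space n = {(xs, ys). length xs = n \<and> length ys = n}"

definition joint :: "('w \<Rightarrow> real) \<Rightarrow> ('w \<Rightarrow> 'w \<Rightarrow> real) \<Rightarrow>
    (nat \<Rightarrow> 'w list \<Rightarrow> 'w list \<Rightarrow> 'w \<Rightarrow> real) \<Rightarrow> nat \<Rightarrow> ('w list \<times> 'w list) \<Rightarrow> real" where
  "joint p T q n \<omega> = (case \<omega> of (xs, ys) \<Rightarrow>
     if length xs = n \<and> length ys = n then
       (\<Prod>t\<in>{1..n}. (if t = 1 then p (xs ! 0) else T (xs ! (t - 2)) (xs ! (t - 1)))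
                      * q t (take t xs) (take (t - 1) ys) (ys ! (t - 1)))
     else 0)"

definition prob_of :: "'s set \<Rightarrow> ('s \<Rightarrow> real) \<Rightarrow> ('s \<Rightarrow> bool) \<Rightarrow> real" where
  "prob_of \<Omega> P E = (\<Sum>\<omega>\<in>{\<omega>\<in>\<Omega>. E \<omega>}. P \<omega>)"

text \<open>Conditional mutual information I(A;B|C) (natural log) of discrete random
variables A, B, C on a finite sample space with pmf P:
 sum over values of P(a,b,c) log (P(a,b,c) P(c) / (P(a,c) P(b,c))),
written as an expectation over outcomes (terms with P \<omega> = 0 vanish).\<close>
definition cond_mi :: "'s set \<Rightarrow> ('s \<Rightarrow> real) \<Rightarrow> ('s \<Rightarrow> 'a) \<Rightarrow> ('s \<Rightarrow> 'b) \<Rightarrow> ('s \<Rightarrow> 'c) \<Rightarrow> real" where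
  "cond_mi \<Omega> P A B C = (\<Sum>\<omega>\<in>\<Omega>. P \<omega> *
     ln ((prob_of \<Omega> P (\<lambda>\<eta>. A \<eta> = A \<omega> \<and> B \<eta> = B \<omega> \<and> C \<eta> = C \<omega>) * prob_of \<Omega> P (\<lambda>\<eta>. C \<eta> = C \<omega>))
       / (prob_of \<Omega> P (\<lambda>\<eta>. A \<eta> = A \<omega> \<and> C \<eta> = C \<omega>) * prob_of \<Omega> P (\<lambda>\<eta>. B \<eta> = B \<omega> \<and> C \<eta> = C \<omega>))))"

definition mutual_info :: "'s set \<Rightarrow> ('s \<Rightarrow> real) \<Rightarrow> ('s \<Rightarrow> 'a) \<Rightarrow> ('s \<Rightarrow> 'b) \<Rightarrow> real" where
  "mutual_info \<Omega> P A B = cond_mi \<Omega> P A B (\<lambda>_. ())"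

end

theory Submission
  imports Defs
begin


lemma po_sum: "finite \<Omega> \<Longrightarrow> prob_of \<Omega> P E = (\<Sum>\<eta>\<in>\<Omega>. if E \<eta> then P \<eta> else 0)"
  unfolding prob_of_def by (simp add: sum.inter_filter)

lemma prob_of_ge:
  assumes "finite \<Omega>" "\<forall>\<omega>\<in>\<Omega>. 0 \<le> P \<omega>" "\<omega> \<in> \<Omega>" "E \<omega>"
  shows "P \<omega> \<le> prob_of \<Omega> P E"
  unfolding prob_of_def using assms by (intro member_le_sum) auto

lemma prob_of_nonneg:
  assumes "\<forall>\<omega>\<in>\<Omega>. 0 \<le> P \<omega>"
  shows "0 \<le> prob_of \<Omega> P E"
  unfolding prob_of_def using assms by (intro sum_nonneg) auto

lemma prob_of_cong:
  assumes "\<forall>\<eta>\<in>\<Omega>. E \<eta> = E' \<eta>"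
  shows "prob_of \<Omega> P E = prob_of \<Omega> P E'"
proof -
  have "{\<omega>\<in>\<Omega>. E \<omega>} = {\<omega>\<in>\<Omega>. E' \<omega>}" using assms by auto
  then show ?thesis unfolding prob_of_def by simp
qed

lemma key_bound:
  fixes P :: "'s \<Rightarrow> real"
  assumes fin: "finite \<Omega>" and nn: "\<forall>\<omega>\<in>\<Omega>. 0 \<le> P \<omega>"
  shows "(\<Sum>\<omega>\<in>\<Omega>. P \<omega> * (prob_of \<Omega> P (\<lambda>\<eta>. A \<eta> = A \<omega> \<and> C \<eta> = C \<omega>) * prob_of \<Omega> P (\<lambda>\<eta>. B \<eta> = B \<omega> \<and> C \<eta> = C \<omega>)
      / (prob_of \<Omega> P (\<lambda>\<eta>. A \<eta> = A \<omega> \<and> B \<eta> = B \<omega> \<and> C \<eta> = C \<omega>) * prob_of \<Omega> P (\<lambda>\<eta>. C \<eta> = C \<omega>))))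
     \<le> (\<Sum>\<omega>\<in>\<Omega>. P \<omega>)"
proof -
  define pabc where "pabc \<omega> = prob_of \<Omega> P (\<lambda>\<eta>. A \<eta> = A \<omega> \<and> B \<eta> = B \<omega> \<and> C \<eta> = C \<omega>)" for \<omega>
  define pc where "pc \<omega> = prob_of \<Omega> P (\<lambda>\<eta>. C \<eta> = C \<omega>)" for \<omega>
  note po = po_sum[OF fin]
  define f where "f \<omega> \<eta> \<zeta> = (if (A \<eta> = A \<omega> \<and> C \<eta> = C \<omega>) \<and> (B \<zeta> = B \<omega> \<and> C \<zeta> = C \<omega>)
      then P \<omega> * (P \<eta> * P \<zeta>) / (pabc \<omega> * pc \<omega>) else 0)" for \<omega> \<eta> \<zeta>
  have s1: "P \<omega> * (prob_of \<Omega> P (\<lambda>\<eta>. A \<eta> = A \<omega> \<and> C \<eta> = C \<omega>) * prob_of \<Omega> P (\<lambda>\<eta>. B \<eta> = B \<omega> \<and> C \<eta> = C \<omega>)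
      / (pabc \<omega> * pc \<omega>)) = (\<Sum>\<eta>\<in>\<Omega>. \<Sum>\<zeta>\<in>\<Omega>. f \<omega> \<eta> \<zeta>)" for \<omega>
  proof -
    have "P \<omega> * (prob_of \<Omega> P (\<lambda>\<eta>. A \<eta> = A \<omega> \<and> C \<eta> = C \<omega>) * prob_of \<Omega> P (\<lambda>\<eta>. B \<eta> = B \<omega> \<and> C \<eta> = C \<omega>)
      / (pabc \<omega> * pc \<omega>)) = P \<omega> / (pabc \<omega> * pc \<omega>) * ((\<Sum>\<eta>\<in>\<Omega>. if A \<eta> = A \<omega> \<and> C \<eta> = C \<omega> then P \<eta> else 0)
          * (\<Sum>\<zeta>\<in>\<Omega>. if B \<zeta> = B \<omega> \<and> C \<zeta> = C \<omega> then P \<zeta> else 0))"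
      by (simp add: po)
    also have "\<dots> = (\<Sum>\<eta>\<in>\<Omega>. \<Sum>\<zeta>\<in>\<Omega>. P \<omega> / (pabc \<omega> * pc \<omega>) * ((if A \<eta> = A \<omega> \<and> C \<eta> = C \<omega> then P \<eta> else 0)
          * (if B \<zeta> = B \<omega> \<and> C \<zeta> = C \<omega> then P \<zeta> else 0)))"
      by (subst sum_product) (simp only: sum_distrib_left)
    also have "\<dots> = (\<Sum>\<eta>\<in>\<Omega>. \<Sum>\<zeta>\<in>\<Omega>. f \<omega> \<eta> \<zeta>)"
      by (intro sum.cong refl) (auto simp: f_def)
    finally show ?thesis .
  qed
  have s2: "(\<Sum>\<omega>\<in>\<Omega>. \<Sum>\<eta>\<in>\<Omega>. \<Sum>\<zeta>\<in>\<Omega>. f \<omega> \<eta> \<zeta>) = (\<Sum>\<eta>\<in>\<Omega>. \<Sum>\<zeta>\<in>\<Omega>. \<Sum>\<omega>\<in>\<Omega>. f \<omega> \<eta> \<zeta>)"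
  proof -
    have "(\<Sum>\<omega>\<in>\<Omega>. \<Sum>\<eta>\<in>\<Omega>. \<Sum>\<zeta>\<in>\<Omega>. f \<omega> \<eta> \<zeta>) = (\<Sum>\<eta>\<in>\<Omega>. \<Sum>\<omega>\<in>\<Omega>. \<Sum>\<zeta>\<in>\<Omega>. f \<omega> \<eta> \<zeta>)"
      by (rule sum.swap)
    also have "\<dots> = (\<Sum>\<eta>\<in>\<Omega>. \<Sum>\<zeta>\<in>\<Omega>. \<Sum>\<omega>\<in>\<Omega>. f \<omega> \<eta> \<zeta>)"
      by (intro sum.cong refl sum.swap)
    finally show ?thesis .
  qed
  have s3: "(\<Sum>\<omega>\<in>\<Omega>. f \<omega> \<eta> \<zeta>) \<le> (if C \<zeta> = C \<eta> then P \<eta> * P \<zeta> / pc \<eta> else 0)"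
    if "\<eta>\<in>\<Omega>" "\<zeta>\<in>\<Omega>" for \<eta> \<zeta>
  proof (cases "C \<zeta> = C \<eta>")
    case False
    then have "\<forall>\<omega>. f \<omega> \<eta> \<zeta> = 0" by (auto simp: f_def)
    then show ?thesis using False by simp
  next
    case True
    define S where "S = prob_of \<Omega> P (\<lambda>\<xi>. A \<xi> = A \<eta> \<and> B \<xi> = B \<zeta> \<and> C \<xi> = C \<eta>)"
    have "(\<Sum>\<omega>\<in>\<Omega>. f \<omega> \<eta> \<zeta>) = (\<Sum>\<omega>\<in>\<Omega>. (if A \<omega> = A \<eta> \<and> B \<omega> = B \<zeta> \<and> C \<omega> = C \<eta> then P \<omega> else 0)
         * (P \<eta> * P \<zeta> / (S * pc \<eta>)))"
    proof (rule sum.cong[OF refl])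
      fix \<omega> assume "\<omega> \<in> \<Omega>"
      show "f \<omega> \<eta> \<zeta> = (if A \<omega> = A \<eta> \<and> B \<omega> = B \<zeta> \<and> C \<omega> = C \<eta> then P \<omega> else 0) * (P \<eta> * P \<zeta> / (S * pc \<eta>))"
      proof (cases "A \<omega> = A \<eta> \<and> B \<omega> = B \<zeta> \<and> C \<omega> = C \<eta>")
        case c: True
        then have "pabc \<omega> = S" unfolding pabc_def S_def by simp
        moreover have "pc \<omega> = pc \<eta>" unfolding pc_def using c by simp
        ultimately show ?thesis using c True by (simp add: f_def)
      next
        case False
        then show ?thesis using True by (auto simp: f_def)
      qed
    qed
    also have "\<dots> = (\<Sum>\<omega>\<in>\<Omega>. (if A \<omega> = A \<eta> \<and> B \<omega> = B \<zeta> \<and> C \<omega> = C \<eta> then P \<omega> else 0))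
         * (P \<eta> * P \<zeta> / (S * pc \<eta>))"
      by (rule sum_distrib_right[symmetric])
    also have "\<dots> = S * (P \<eta> * P \<zeta> / (S * pc \<eta>))"
      by (simp only: S_def po)
    also have "\<dots> \<le> P \<eta> * P \<zeta> / pc \<eta>"
    proof (cases "S = 0")
      case True
      have "0 \<le> pc \<eta>" unfolding pc_def using nn by (rule prob_of_nonneg)
      then show ?thesis using True nn that by simp
    next
      case False
      then show ?thesis by simp
    qed
    finally show ?thesis using True by simp
  qed
  have s4: "(\<Sum>\<zeta>\<in>\<Omega>. if C \<zeta> = C \<eta> then P \<eta> * P \<zeta> / pc \<eta> else 0) \<le> P \<eta>" if "\<eta>\<in>\<Omega>" for \<eta>
  proof -
    have "(\<Sum>\<zeta>\<in>\<Omega>. if C \<zeta> = C \<eta> then P \<eta> * P \<zeta> / pc \<eta> else 0)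
        = (\<Sum>\<zeta>\<in>\<Omega>. (if C \<zeta> = C \<eta> then P \<zeta> else 0) * (P \<eta> / pc \<eta>))"
      by (intro sum.cong refl) auto
    also have "\<dots> = (\<Sum>\<zeta>\<in>\<Omega>. (if C \<zeta> = C \<eta> then P \<zeta> else 0)) * (P \<eta> / pc \<eta>)"
      by (rule sum_distrib_right[symmetric])
    also have "\<dots> = pc \<eta> * (P \<eta> / pc \<eta>)"
      by (simp only: pc_def po)
    also have "\<dots> \<le> P \<eta>"
      using nn that by (cases "pc \<eta> = 0") auto
    finally show ?thesis .
  qed
  have "(\<Sum>\<omega>\<in>\<Omega>. P \<omega> * (prob_of \<Omega> P (\<lambda>\<eta>. A \<eta> = A \<omega> \<and> C \<eta> = C \<omega>) * prob_of \<Omega> P (\<lambda>\<eta>. B \<eta> = B \<omega> \<and> C \<eta> = C \<omega>)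
      / (pabc \<omega> * pc \<omega>))) = (\<Sum>\<eta>\<in>\<Omega>. \<Sum>\<zeta>\<in>\<Omega>. \<Sum>\<omega>\<in>\<Omega>. f \<omega> \<eta> \<zeta>)"
    using s1 s2 by simp
  also have "\<dots> \<le> (\<Sum>\<eta>\<in>\<Omega>. \<Sum>\<zeta>\<in>\<Omega>. if C \<zeta> = C \<eta> then P \<eta> * P \<zeta> / pc \<eta> else 0)"
    by (intro sum_mono s3)
  also have "\<dots> \<le> (\<Sum>\<eta>\<in>\<Omega>. P \<eta>)"
    by (intro sum_mono s4)
  finally show ?thesis unfolding pabc_def pc_def .
qed

lemma ln_aux: fixes P a b R :: real assumes a0: "0 < a" and b0: "0 < b" and R: "R = b / a"
  shows "P * ln (a / b) = P * (R - 1 - ln R) + (P - P * R)"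
proof -
  have l1: "ln (a/b) = ln a - ln b" by (rule ln_divide_pos[OF a0 b0])
  have l2: "ln R = ln b - ln a" unfolding R by (rule ln_divide_pos[OF b0 a0])
  show ?thesis unfolding l1 l2 by (simp add: algebra_simps)
qed

lemma cmi_gibbs:
  fixes P :: "'s \<Rightarrow> real"
  assumes fin: "finite \<Omega>" and nn: "\<forall>\<omega>\<in>\<Omega>. 0 \<le> P \<omega>"
  shows "0 \<le> cond_mi \<Omega> P A B C \<and> (cond_mi \<Omega> P A B C = 0 \<longrightarrow>
    (\<forall>\<omega>\<in>\<Omega>. 0 < P \<omega> \<longrightarrow>
      prob_of \<Omega> P (\<lambda>\<eta>. A \<eta> = A \<omega> \<and> B \<eta> = B \<omega> \<and> C \<eta> = C \<omega>) * prob_of \<Omega> P (\<lambda>\<eta>. C \<eta> = C \<omega>)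
      = prob_of \<Omega> P (\<lambda>\<eta>. A \<eta> = A \<omega> \<and> C \<eta> = C \<omega>) * prob_of \<Omega> P (\<lambda>\<eta>. B \<eta> = B \<omega> \<and> C \<eta> = C \<omega>)))"
proof -
  define pabc where "pabc \<omega> = prob_of \<Omega> P (\<lambda>\<eta>. A \<eta> = A \<omega> \<and> B \<eta> = B \<omega> \<and> C \<eta> = C \<omega>)" for \<omega>
  define pc where "pc \<omega> = prob_of \<Omega> P (\<lambda>\<eta>. C \<eta> = C \<omega>)" for \<omega>
  define pac where "pac \<omega> = prob_of \<Omega> P (\<lambda>\<eta>. A \<eta> = A \<omega> \<and> C \<eta> = C \<omega>)" for \<omega>
  define pbc where "pbc \<omega> = prob_of \<Omega> P (\<lambda>\<eta>. B \<eta> = B \<omega> \<and> C \<eta> = C \<omega>)" for \<omega>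
  define R where "R \<omega> = pac \<omega> * pbc \<omega> / (pabc \<omega> * pc \<omega>)" for \<omega>
  have pos: "0 < pabc \<omega> \<and> 0 < pac \<omega> \<and> 0 < pbc \<omega> \<and> 0 < pc \<omega>" if "\<omega> \<in> \<Omega>" "0 < P \<omega>" for \<omega>
  proof -
    have "P \<omega> \<le> pabc \<omega>" "P \<omega> \<le> pac \<omega>" "P \<omega> \<le> pbc \<omega>" "P \<omega> \<le> pc \<omega>"
      unfolding pabc_def pac_def pbc_def pc_def by (rule prob_of_ge[OF fin nn that(1)], simp)+
    then show ?thesis using that(2) by linarith
  qed
  have cmi: "cond_mi \<Omega> P A B C = (\<Sum>\<omega>\<in>\<Omega>. P \<omega> * ln (pabc \<omega> * pc \<omega> / (pac \<omega> * pbc \<omega>)))"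
    unfolding cond_mi_def pabc_def pc_def pac_def pbc_def ..
  have trm: "P \<omega> * ln (pabc \<omega> * pc \<omega> / (pac \<omega> * pbc \<omega>)) = P \<omega> * (R \<omega> - 1 - ln (R \<omega>)) + (P \<omega> - P \<omega> * R \<omega>)"
    if "\<omega> \<in> \<Omega>" for \<omega>
  proof (cases "P \<omega> = 0")
    case True then show ?thesis by simp
  next
    case False
    then have "0 < P \<omega>" using nn that by force
    note p = pos[OF that this]
    show ?thesis
      by (rule ln_aux) (use p in \<open>simp_all add: R_def\<close>)
  qed
  have cmi2: "cond_mi \<Omega> P A B C = (\<Sum>\<omega>\<in>\<Omega>. P \<omega> * (R \<omega> - 1 - ln (R \<omega>)) + (P \<omega> - P \<omega> * R \<omega>))"
    unfolding cmi by (rule sum.cong[OF refl trm])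
  also have "\<dots> = (\<Sum>\<omega>\<in>\<Omega>. P \<omega> * (R \<omega> - 1 - ln (R \<omega>))) + ((\<Sum>\<omega>\<in>\<Omega>. P \<omega>) - (\<Sum>\<omega>\<in>\<Omega>. P \<omega> * R \<omega>))"
    by (simp only: sum.distrib sum_subtractf)
  finally have cmi3: "cond_mi \<Omega> P A B C = (\<Sum>\<omega>\<in>\<Omega>. P \<omega> * (R \<omega> - 1 - ln (R \<omega>))) + ((\<Sum>\<omega>\<in>\<Omega>. P \<omega>) - (\<Sum>\<omega>\<in>\<Omega>. P \<omega> * R \<omega>))" .
  have t1: "0 \<le> P \<omega> * (R \<omega> - 1 - ln (R \<omega>))" if "\<omega> \<in> \<Omega>" for \<omega>
  proof (cases "P \<omega> = 0")
    case True then show ?thesis by simp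
  next
    case False
    then have pw: "0 < P \<omega>" using nn that by force
    note p = pos[OF that this]
    then have "0 < R \<omega>" unfolding R_def by simp
    then have "ln (R \<omega>) \<le> R \<omega> - 1" by (rule ln_le_minus_one)
    then show ?thesis using pw by simp
  qed
  have kb: "(\<Sum>\<omega>\<in>\<Omega>. P \<omega> * R \<omega>) \<le> (\<Sum>\<omega>\<in>\<Omega>. P \<omega>)"
    using key_bound[OF fin nn, of A C B] unfolding R_def pac_def pbc_def pabc_def pc_def .
  have s1: "0 \<le> (\<Sum>\<omega>\<in>\<Omega>. P \<omega> * (R \<omega> - 1 - ln (R \<omega>)))" by (intro sum_nonneg t1)
  have eq: "\<forall>\<omega>\<in>\<Omega>. 0 < P \<omega> \<longrightarrow> pabc \<omega> * pc \<omega> = pac \<omega> * pbc \<omega>" if z: "cond_mi \<Omega> P A B C = 0"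
  proof (intro ballI impI)
    fix \<omega> assume w: "\<omega> \<in> \<Omega>" "0 < P \<omega>"
    have "(\<Sum>\<omega>\<in>\<Omega>. P \<omega> * (R \<omega> - 1 - ln (R \<omega>))) = 0" using z cmi3 kb s1 by linarith
    then have "\<forall>\<omega>\<in>\<Omega>. P \<omega> * (R \<omega> - 1 - ln (R \<omega>)) = 0"
      using sum_nonneg_eq_0_iff[OF fin, of "\<lambda>\<omega>. P \<omega> * (R \<omega> - 1 - ln (R \<omega>))"] t1 by simp
    then have "P \<omega> * (R \<omega> - 1 - ln (R \<omega>)) = 0" using w(1) by blast
    then have r0: "R \<omega> - 1 - ln (R \<omega>) = 0" using w(2) by simp
    note p = pos[OF w]
    have rp: "0 < R \<omega>" using p unfolding R_def by simp
    have r1: "R \<omega> = 1" using ln_eq_minus_one[OF rp] r0 by simp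
    have "pac \<omega> * pbc \<omega> = R \<omega> * (pabc \<omega> * pc \<omega>)" unfolding R_def using p by simp
    then show "pabc \<omega> * pc \<omega> = pac \<omega> * pbc \<omega>" using r1 by simp
  qed
  have "0 \<le> cond_mi \<Omega> P A B C" using cmi3 kb s1 by linarith
  then show ?thesis using eq unfolding pabc_def pac_def pbc_def pc_def by blast
qed

definition Gf :: "'s set \<Rightarrow> ('s \<Rightarrow> real) \<Rightarrow> ('s \<Rightarrow> 'a) \<Rightarrow> real" where
  "Gf \<Omega> P F = (\<Sum>\<omega>\<in>\<Omega>. P \<omega> * ln (prob_of \<Omega> P (\<lambda>\<eta>. F \<eta> = F \<omega>)))"

lemma Gf_cong:
  assumes "\<forall>\<omega>\<in>\<Omega>. \<forall>\<eta>\<in>\<Omega>. (F \<eta> = F \<omega>) = (F' \<eta> = F' \<omega>)"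
  shows "Gf \<Omega> P F = Gf \<Omega> P F'"
  unfolding Gf_def
proof (intro sum.cong refl)
  fix \<omega> assume w: "\<omega> \<in> \<Omega>"
  have "prob_of \<Omega> P (\<lambda>\<eta>. F \<eta> = F \<omega>) = prob_of \<Omega> P (\<lambda>\<eta>. F' \<eta> = F' \<omega>)"
    by (rule prob_of_cong) (use assms w in blast)
  then show "P \<omega> * ln (prob_of \<Omega> P (\<lambda>\<eta>. F \<eta> = F \<omega>)) = P \<omega> * ln (prob_of \<Omega> P (\<lambda>\<eta>. F' \<eta> = F' \<omega>))" by simp
qed

lemma cmi_G:
  fixes P :: "'s \<Rightarrow> real"
  assumes fin: "finite \<Omega>" and nn: "\<forall>\<omega>\<in>\<Omega>. 0 \<le> P \<omega>"
  shows "cond_mi \<Omega> P A B C = Gf \<Omega> P (\<lambda>\<omega>. (A \<omega>, B \<omega>, C \<omega>)) + Gf \<Omega> P C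
     - Gf \<Omega> P (\<lambda>\<omega>. (A \<omega>, C \<omega>)) - Gf \<Omega> P (\<lambda>\<omega>. (B \<omega>, C \<omega>))"
proof -
  have "cond_mi \<Omega> P A B C = (\<Sum>\<omega>\<in>\<Omega>. P \<omega> * ln (prob_of \<Omega> P (\<lambda>\<eta>. A \<eta> = A \<omega> \<and> B \<eta> = B \<omega> \<and> C \<eta> = C \<omega>))
     + P \<omega> * ln (prob_of \<Omega> P (\<lambda>\<eta>. C \<eta> = C \<omega>)) - P \<omega> * ln (prob_of \<Omega> P (\<lambda>\<eta>. A \<eta> = A \<omega> \<and> C \<eta> = C \<omega>))
     - P \<omega> * ln (prob_of \<Omega> P (\<lambda>\<eta>. B \<eta> = B \<omega> \<and> C \<eta> = C \<omega>)))"
    unfolding cond_mi_def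
  proof (intro sum.cong refl)
    fix \<omega> assume w: "\<omega> \<in> \<Omega>"
    show "P \<omega> * ln (prob_of \<Omega> P (\<lambda>\<eta>. A \<eta> = A \<omega> \<and> B \<eta> = B \<omega> \<and> C \<eta> = C \<omega>) * prob_of \<Omega> P (\<lambda>\<eta>. C \<eta> = C \<omega>) /
          (prob_of \<Omega> P (\<lambda>\<eta>. A \<eta> = A \<omega> \<and> C \<eta> = C \<omega>) * prob_of \<Omega> P (\<lambda>\<eta>. B \<eta> = B \<omega> \<and> C \<eta> = C \<omega>))) =
         P \<omega> * ln (prob_of \<Omega> P (\<lambda>\<eta>. A \<eta> = A \<omega> \<and> B \<eta> = B \<omega> \<and> C \<eta> = C \<omega>)) +
         P \<omega> * ln (prob_of \<Omega> P (\<lambda>\<eta>. C \<eta> = C \<omega>)) - P \<omega> * ln (prob_of \<Omega> P (\<lambda>\<eta>. A \<eta> = A \<omega> \<and> C \<eta> = C \<omega>)) -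
         P \<omega> * ln (prob_of \<Omega> P (\<lambda>\<eta>. B \<eta> = B \<omega> \<and> C \<eta> = C \<omega>))"
    proof (cases "P \<omega> = 0")
      case True then show ?thesis by simp
    next
      case False
      then have pw: "0 < P \<omega>" using nn w by force
      have "P \<omega> \<le> prob_of \<Omega> P (\<lambda>\<eta>. A \<eta> = A \<omega> \<and> B \<eta> = B \<omega> \<and> C \<eta> = C \<omega>)"
           "P \<omega> \<le> prob_of \<Omega> P (\<lambda>\<eta>. C \<eta> = C \<omega>)"
           "P \<omega> \<le> prob_of \<Omega> P (\<lambda>\<eta>. A \<eta> = A \<omega> \<and> C \<eta> = C \<omega>)"
           "P \<omega> \<le> prob_of \<Omega> P (\<lambda>\<eta>. B \<eta> = B \<omega> \<and> C \<eta> = C \<omega>)"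
        by (rule prob_of_ge[OF fin nn w], simp)+
      then have "0 < prob_of \<Omega> P (\<lambda>\<eta>. A \<eta> = A \<omega> \<and> B \<eta> = B \<omega> \<and> C \<eta> = C \<omega>)"
           "0 < prob_of \<Omega> P (\<lambda>\<eta>. C \<eta> = C \<omega>)"
           "0 < prob_of \<Omega> P (\<lambda>\<eta>. A \<eta> = A \<omega> \<and> C \<eta> = C \<omega>)"
           "0 < prob_of \<Omega> P (\<lambda>\<eta>. B \<eta> = B \<omega> \<and> C \<eta> = C \<omega>)"
        using pw by linarith+
      then show ?thesis by (simp add: ln_divide_pos ln_mult_pos algebra_simps)
    qed
  qed
  then show ?thesis unfolding Gf_def by (simp add: sum.distrib sum_subtractf)
qed



definition fa :: "('w \<Rightarrow> real) \<Rightarrow> ('w \<Rightarrow> 'w \<Rightarrow> real) \<Rightarrow> 'w list \<Rightarrow> nat \<Rightarrow> real" where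
  "fa p T xs s = (if s = 1 then p (xs!0) else T (xs!(s-2)) (xs!(s-1)))"
definition fq :: "(nat \<Rightarrow> 'w list \<Rightarrow> 'w list \<Rightarrow> 'w \<Rightarrow> real) \<Rightarrow> 'w list \<Rightarrow> 'w list \<Rightarrow> nat \<Rightarrow> real" where
  "fq q xs ys s = q s (take s xs) (take (s-1) ys) (ys!(s-1))"
definition pre where
  "pre p T q k xs ys = (\<Prod>s\<in>{1..k}. fa p T xs s * fq q xs ys s)"
definition fqp where
  "fqp q k xs ys = (\<Prod>s\<in>{1..k}. fq q xs ys s)"

lemma joint_eq: "joint p T q n (xs,ys) = (if length xs = n \<and> length ys = n then pre p T q n xs ys else 0)"
  by (simp add: joint_def pre_def fa_def fq_def)

lemma take_eq_nth: "i < s \<Longrightarrow> take s xs = take s xs' \<Longrightarrow> s \<le> length xs \<Longrightarrow> s \<le> length xs' \<Longrightarrow> xs!i = xs'!i"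
  by (metis nth_take)

lemma fa_cong: "1 \<le> s \<Longrightarrow> s \<le> length xs \<Longrightarrow> s \<le> length xs' \<Longrightarrow> take s xs = take s xs' \<Longrightarrow> fa p T xs s = fa p T xs' s"
  unfolding fa_def using take_eq_nth[of "s-1" s xs xs'] take_eq_nth[of "s-2" s xs xs'] take_eq_nth[of 0 s xs xs']
  by auto

lemma fq_cong: "1 \<le> s \<Longrightarrow> s \<le> length ys \<Longrightarrow> s \<le> length ys' \<Longrightarrow> take s xs = take s xs' \<Longrightarrow> take s ys = take s ys'
   \<Longrightarrow> fq q xs ys s = fq q xs' ys' s"
proof -
  assume a: "1 \<le> s" "s \<le> length ys" "s \<le> length ys'" "take s xs = take s xs'" "take s ys = take s ys'"
  have "take (s-1) ys = take (s-1) ys'"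
    by (metis a(5) diff_le_self min_def take_take)
  moreover have "ys!(s-1) = ys'!(s-1)" using take_eq_nth[of "s-1" s ys ys'] a by simp
  ultimately show ?thesis unfolding fq_def using a by simp
qed

lemma pre_cong:
  assumes "k \<le> length xs" "k \<le> length xs'" "k \<le> length ys" "k \<le> length ys'"
    "take k xs = take k xs'" "take k ys = take k ys'"
  shows "pre p T q k xs ys = pre p T q k xs' ys'"
  unfolding pre_def
proof (intro prod.cong refl)
  fix s assume s: "s \<in> {1..k}"
  have "take s xs = take s xs'" "take s ys = take s ys'"
    by (metis assms(5,6) s atLeastAtMost_iff min.absorb1 take_take)+
  then show "fa p T xs s * fq q xs ys s = fa p T xs' s * fq q xs' ys' s"
  proof -
    have "fa p T xs s = fa p T xs' s" using s assms \<open>take s xs = take s xs'\<close> by (intro fa_cong) auto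
    moreover have "fq q xs ys s = fq q xs' ys' s" using s assms \<open>take s xs = take s xs'\<close> \<open>take s ys = take s ys'\<close>
      by (intro fq_cong) auto
    ultimately show ?thesis by simp
  qed
qed

lemma pre_Suc: "pre p T q (Suc k) xs ys = pre p T q k xs ys * (fa p T xs (Suc k) * fq q xs ys (Suc k))"
  unfolding pre_def by (simp add: prod.cl_ivl_Suc)

lemma pre_split: "pre p T q k xs ys = (\<Prod>s\<in>{1..k}. fa p T xs s) * fqp q k xs ys"
  unfolding pre_def fqp_def by (rule prod.distrib)

lemma fa_nonneg: "prob_vec p \<Longrightarrow> markov_kernel T \<Longrightarrow> 0 \<le> fa p T xs s"
  unfolding fa_def prob_vec_def markov_kernel_def by auto

lemma fq_nonneg: "q \<in> QH \<Longrightarrow> 1 \<le> s \<Longrightarrow> s \<le> length xs \<Longrightarrow> s \<le> length ys \<Longrightarrow> 0 \<le> fq q xs ys s"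
  unfolding fq_def QH_def prob_vec_def by auto

lemma pre_nonneg: "prob_vec p \<Longrightarrow> markov_kernel T \<Longrightarrow> q \<in> QH \<Longrightarrow> k \<le> length xs \<Longrightarrow> k \<le> length ys
   \<Longrightarrow> 0 \<le> pre p T q k xs ys"
  unfolding pre_def by (intro prod_nonneg ballI mult_nonneg_nonneg fa_nonneg fq_nonneg) auto

lemma joint_nonneg: "prob_vec p \<Longrightarrow> markov_kernel T \<Longrightarrow> q \<in> QH \<Longrightarrow> 0 \<le> joint p T q n \<omega>"
  by (cases \<omega>) (simp add: joint_eq pre_nonneg)

lemma finite_traj: "finite (traj_space n :: ('w::finite list \<times> 'w list) set)"
proof -
  have f: "finite {xs::'w list. length xs = n}" using finite_lists_length_eq[of "UNIV::'w set" n] by simp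
  have "traj_space n = {xs::'w list. length xs = n} \<times> {ys::'w list. length ys = n}"
    unfolding traj_space_def by auto
  then show ?thesis using f by simp
qed

lemma fqp_snoc: "length w = k \<Longrightarrow> fqp q (Suc k) x (w@[v]) = fqp q k x w * q (Suc k) (take (Suc k) x) w v"
proof -
  assume l: "length w = k"
  have "fq q x (w@[v]) s = fq q x w s" if "s \<in> {1..k}" for s
    using that l unfolding fq_def by (auto simp: nth_append)
  then have "fqp q k x (w@[v]) = fqp q k x w" unfolding fqp_def by (rule prod.cong[OF refl])
  moreover have "fq q x (w@[v]) (Suc k) = q (Suc k) (take (Suc k) x) w v"
    using l unfolding fq_def by (simp add: nth_append)
  ultimately show ?thesis unfolding fqp_def by (simp add: prod.cl_ivl_Suc)
qed

lemma pv_sum: "prob_vec f \<Longrightarrow> (\<Sum>v\<in>UNIV. f v) = 1"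
  unfolding prob_vec_def by simp

lemma marg_sum:
  fixes q :: "nat \<Rightarrow> 'w::finite list \<Rightarrow> 'w list \<Rightarrow> 'w \<Rightarrow> real"
  assumes q: "q \<in> QH" and lx: "length x = n"
  shows "length w = k \<Longrightarrow> k \<le> n \<Longrightarrow> (\<Sum>ys\<in>{ys. length ys = n \<and> take k ys = w}. fqp q n x ys) = fqp q k x w"
proof (induction "n - k" arbitrary: k w)
  case 0
  then have "k = n" by simp
  then have "{ys. length ys = n \<and> take k ys = w} = {w}" using 0 by auto
  then show ?case using \<open>k = n\<close> by simp
next
  case (Suc m)
  have kn: "k < n" using Suc by simp
  define S where "S = {ys::'w list. length ys = n \<and> take k ys = w}"
  have finS: "finite S"
  proof -
    have "S \<subseteq> {ys. set ys \<subseteq> UNIV \<and> length ys = n}" unfolding S_def by auto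
    then show ?thesis using finite_lists_length_eq[of "UNIV::'w set" n] finite_subset by auto
  qed
  have "(\<Sum>ys\<in>S. fqp q n x ys) = (\<Sum>v\<in>UNIV. \<Sum>ys\<in>{ys. ys \<in> S \<and> ys!k = v}. fqp q n x ys)"
    by (rule sum.group[symmetric]) (use finS in auto)
  also have "\<dots> = (\<Sum>v\<in>UNIV. fqp q (Suc k) x (w@[v]))"
  proof (intro sum.cong refl)
    fix v
    have "{ys. ys \<in> S \<and> ys!k = v} = {ys. length ys = n \<and> take (Suc k) ys = w@[v]}"
    proof (intro Collect_cong iffI)
      fix ys assume "ys \<in> S \<and> ys!k = v"
      then show "length ys = n \<and> take (Suc k) ys = w@[v]" unfolding S_def using kn
        by (auto simp: take_Suc_conv_app_nth)
    next
      fix ys assume a: "length ys = n \<and> take (Suc k) ys = w@[v]"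
      have e1: "take (Suc k) ys = take k ys @ [ys!k]" by (rule take_Suc_conv_app_nth) (use a kn in simp)
      have "take k ys = w \<and> ys!k = v" using e1 a append1_eq_conv by metis
      then show "ys \<in> S \<and> ys!k = v" unfolding S_def using a by simp
    qed
    moreover have "m = n - Suc k" using Suc by simp
    ultimately show "(\<Sum>ys\<in>{ys. ys \<in> S \<and> ys!k = v}. fqp q n x ys) = fqp q (Suc k) x (w@[v])"
      using Suc kn by simp
  qed
  also have "\<dots> = (\<Sum>v\<in>UNIV. fqp q k x w * q (Suc k) (take (Suc k) x) w v)"
    using Suc.prems(1) by (intro sum.cong refl fqp_snoc)
  also have "\<dots> = fqp q k x w * (\<Sum>v\<in>UNIV. q (Suc k) (take (Suc k) x) w v)"
    by (simp add: sum_distrib_left)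
  also have "\<dots> = fqp q k x w"
  proof -
    have "prob_vec (q (Suc k) (take (Suc k) x) w)" using q kn lx Suc unfolding QH_def by auto
    then show ?thesis by (simp add: pv_sum)
  qed
  finally show ?case unfolding S_def .
qed

lemma prX:
  fixes q :: "nat \<Rightarrow> 'w::finite list \<Rightarrow> 'w list \<Rightarrow> 'w \<Rightarrow> real"
  assumes q: "q \<in> QH" and lx: "length x = n" and lw: "length w \<le> n"
  shows "prob_of (traj_space n) (joint p T q n) (\<lambda>\<eta>. fst \<eta> = x \<and> take (length w) (snd \<eta>) = w)
     = (\<Prod>s\<in>{1..n}. fa p T x s) * fqp q (length w) x w"
proof -
  have e: "{\<eta>\<in>traj_space n. fst \<eta> = x \<and> take (length w) (snd \<eta>) = w} = Pair x ` {ys. length ys = n \<and> take (length w) ys = w}"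
  proof (intro set_eqI iffI)
    fix \<eta> assume a: "\<eta> \<in> {\<eta>\<in>traj_space n. fst \<eta> = x \<and> take (length w) (snd \<eta>) = w}"
    obtain u v where uv: "\<eta> = (u, v)" by (cases \<eta>)
    show "\<eta> \<in> Pair x ` {ys. length ys = n \<and> take (length w) ys = w}"
      by (rule image_eqI[of _ _ v]) (use a uv in \<open>auto simp: traj_space_def\<close>)
  next
    fix \<eta> assume "\<eta> \<in> Pair x ` {ys. length ys = n \<and> take (length w) ys = w}"
    then show "\<eta> \<in> {\<eta>\<in>traj_space n. fst \<eta> = x \<and> take (length w) (snd \<eta>) = w}"
      using lx by (auto simp: traj_space_def)
  qed
  have "prob_of (traj_space n) (joint p T q n) (\<lambda>\<eta>. fst \<eta> = x \<and> take (length w) (snd \<eta>) = w)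
     = (\<Sum>ys\<in>{ys. length ys = n \<and> take (length w) ys = w}. joint p T q n (x, ys))"
    unfolding prob_of_def e by (subst sum.reindex) (auto simp: inj_on_def)
  also have "\<dots> = (\<Sum>ys\<in>{ys. length ys = n \<and> take (length w) ys = w}. (\<Prod>s\<in>{1..n}. fa p T x s) * fqp q n x ys)"
    using lx by (intro sum.cong refl) (simp add: joint_eq pre_split)
  also have "\<dots> = (\<Prod>s\<in>{1..n}. fa p T x s) * (\<Sum>ys\<in>{ys. length ys = n \<and> take (length w) ys = w}. fqp q n x ys)"
    by (rule sum_distrib_left[symmetric])
  also have "\<dots> = (\<Prod>s\<in>{1..n}. fa p T x s) * fqp q (length w) x w"
    using marg_sum[OF q lx refl lw] by simp
  finally show ?thesis .
qed

lemma pv_pos: "prob_vec f \<Longrightarrow> \<exists>a. 0 < f (a::'w::finite)"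
proof (rule ccontr)
  assume pv: "prob_vec f" and "\<not> (\<exists>a. 0 < f a)"
  then have "\<forall>a. f a \<le> 0" by (auto simp: not_less)
  then have "(\<Sum>a\<in>UNIV. f a) \<le> 0" by (simp add: sum_nonpos)
  then show False using pv_sum[OF pv] by simp
qed

lemma ext_pos:
  fixes q :: "nat \<Rightarrow> 'w::finite list \<Rightarrow> 'w list \<Rightarrow> 'w \<Rightarrow> real"
  assumes p: "prob_vec p" and T: "markov_kernel T" and q: "q \<in> QH"
    and t: "1 \<le> t" "t \<le> n" and l: "length x0 = t" "length y0 = t" and pos: "0 < pre p T q t x0 y0"
  shows "\<exists>x' y'. length x' = n \<and> length y' = n \<and> take t x' = x0 \<and> take t y' = y0 \<and> 0 < pre p T q n x' y'"
proof -
  have "\<forall>m. t + m \<le> n \<longrightarrow> (\<exists>x' y'. length x' = t + m \<and> length y' = t + m \<and> take t x' = x0 \<and> take t y' = y0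
          \<and> 0 < pre p T q (t + m) x' y')"
  proof
    fix m show "t + m \<le> n \<longrightarrow> (\<exists>x' y'. length x' = t + m \<and> length y' = t + m \<and> take t x' = x0 \<and> take t y' = y0
          \<and> 0 < pre p T q (t + m) x' y')"
    proof (induction m)
      case 0 then show ?case by (intro impI exI[of _ x0] exI[of _ y0]) (simp add: l pos)
    next
      case (Suc m)
      show ?case
      proof
        assume le: "t + Suc m \<le> n"
        define k where "k = t + m"
        obtain x' y' where xy: "length x' = k" "length y' = k" "take t x' = x0" "take t y' = y0" "0 < pre p T q k x' y'"
          using Suc le unfolding k_def by auto
        obtain a where a: "0 < T (x'!(k-1)) a" using pv_pos T unfolding markov_kernel_def by blast
        have "prob_vec (q (Suc k) (x'@[a]) y')" using q xy unfolding QH_def by auto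
        then obtain b where b: "0 < q (Suc k) (x'@[a]) y' b" using pv_pos by blast
        have k1: "1 \<le> k" using t unfolding k_def by simp
        have "pre p T q k (x'@[a]) (y'@[b]) = pre p T q k x' y'"
          by (rule pre_cong) (use xy in auto)
        moreover have "fa p T (x'@[a]) (Suc k) = T (x'!(k-1)) a"
          unfolding fa_def using k1 xy by (auto simp: nth_append)
        moreover have "fq q (x'@[a]) (y'@[b]) (Suc k) = q (Suc k) (x'@[a]) y' b"
          unfolding fq_def using xy by (simp add: nth_append)
        ultimately have "pre p T q (Suc k) (x'@[a]) (y'@[b]) = pre p T q k x' y' * (T (x'!(k-1)) a * q (Suc k) (x'@[a]) y' b)"
          by (simp add: pre_Suc)
        then have "0 < pre p T q (Suc k) (x'@[a]) (y'@[b])" using xy a b by simp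
        moreover have "take t (x'@[a]) = x0" "take t (y'@[b]) = y0" using xy k_def by auto
        ultimately show "\<exists>x' y'. length x' = t + Suc m \<and> length y' = t + Suc m \<and> take t x' = x0 \<and> take t y' = y0
          \<and> 0 < pre p T q (t + Suc m) x' y'"
          using xy k_def by (intro exI[of _ "x'@[a]"] exI[of _ "y'@[b]"]) auto
      qed
    qed
  qed
  from this[rule_format, of "n - t"] t show ?thesis by simp
qed



definition Zt :: "nat \<Rightarrow> 'w list \<times> 'w list \<Rightarrow> 'w list" where "Zt t \<omega> = drop (t-2) (take t (fst \<omega>))"
definition Bt :: "nat \<Rightarrow> 'w list \<times> 'w list \<Rightarrow> 'w" where "Bt t \<omega> = snd \<omega> ! (t-1)"
definition ZC :: "nat \<Rightarrow> 'w list \<times> 'w list \<Rightarrow> 'w list \<times> 'w list" where "ZC t \<omega> = (Zt t \<omega>, take (t-1) (snd \<omega>))"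

lemma tk: "1 \<le> t \<Longrightarrow> t \<le> length ys \<Longrightarrow> take t ys = take (t-1) ys @ [ys!(t-1)]"
  using take_Suc_conv_app_nth[of "t-1" ys] by simp

lemma tele: "(\<Sum>t=1..(n::nat). (f t - f (t-1) :: real)) = f n - f 0"
  by (induction n) (auto simp: sum.cl_ivl_Suc)

lemma mi_decomp:
  fixes P :: "'w list \<times> 'w list \<Rightarrow> real"
  assumes nn: "\<forall>\<omega>\<in>traj_space n. 0 \<le> P \<omega>" and fin: "finite (traj_space n :: ('w list \<times> 'w list) set)"
  shows "mutual_info (traj_space n) P fst snd
     = (\<Sum>t=1..n. cond_mi (traj_space n) P (\<lambda>\<omega>. drop (t - 2) (take t (fst \<omega>))) (\<lambda>\<omega>. snd \<omega> ! (t - 1))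
                 (\<lambda>\<omega>. take (t - 1) (snd \<omega>)))
     + (\<Sum>t=1..n. cond_mi (traj_space n) P fst (Bt t) (ZC t))"
proof -
  define \<Omega> where "\<Omega> = (traj_space n :: ('w list \<times> 'w list) set)"
  define GXY where "GXY k = Gf \<Omega> P (\<lambda>\<omega>. (fst \<omega>, take k (snd \<omega>)))" for k
  define GY where "GY k = Gf \<Omega> P (\<lambda>\<omega>. take k (snd \<omega>))" for k
  define GZY where "GZY t k = Gf \<Omega> P (\<lambda>\<omega>. (Zt t \<omega>, take k (snd \<omega>)))" for t k
  note cg = cmi_G[OF fin nn]
  have S: "cond_mi \<Omega> P (\<lambda>\<omega>. drop (t - 2) (take t (fst \<omega>))) (\<lambda>\<omega>. snd \<omega> ! (t - 1)) (\<lambda>\<omega>. take (t - 1) (snd \<omega>))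
      = GZY t t + GY (t-1) - GZY t (t-1) - GY t" if t: "t \<in> {1..n}" for t
  proof -
    have ti: "(take t ys = take t ys') = (ys!(t-1) = ys'!(t-1) \<and> take (t-1) ys = take (t-1) ys')"
      if "length ys = n" "length ys' = n" for ys ys' :: "'w list"
      using tk[of t ys] tk[of t ys'] t that by auto
    have 1: "Gf \<Omega> P (\<lambda>\<omega>. (drop (t - 2) (take t (fst \<omega>)), snd \<omega> ! (t - 1), take (t - 1) (snd \<omega>))) = GZY t t"
      unfolding GZY_def by (rule Gf_cong) (auto simp: \<Omega>_def traj_space_def Zt_def ti)
    have 2: "Gf \<Omega> P (\<lambda>\<omega>. (snd \<omega> ! (t - 1), take (t - 1) (snd \<omega>))) = GY t"
      unfolding GY_def by (rule Gf_cong) (auto simp: \<Omega>_def traj_space_def ti)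
    have 3: "Gf \<Omega> P (\<lambda>\<omega>. (drop (t - 2) (take t (fst \<omega>)), take (t - 1) (snd \<omega>))) = GZY t (t-1)"
      unfolding GZY_def Zt_def by simp
    show ?thesis unfolding cg[unfolded \<Omega>_def[symmetric]] 1 2 3 GY_def by simp
  qed
  have D: "cond_mi \<Omega> P fst (Bt t) (ZC t) = GXY t + GZY t (t-1) - GXY (t-1) - GZY t t" if t: "t \<in> {1..n}" for t
  proof -
    have ti: "(take t ys = take t ys') = (ys!(t-1) = ys'!(t-1) \<and> take (t-1) ys = take (t-1) ys')"
      if "length ys = n" "length ys' = n" for ys ys' :: "'w list"
      using tk[of t ys] tk[of t ys'] t that by auto
    have 1: "Gf \<Omega> P (\<lambda>\<omega>. (fst \<omega>, Bt t \<omega>, ZC t \<omega>)) = GXY t"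
      unfolding GXY_def by (rule Gf_cong) (auto simp: \<Omega>_def traj_space_def Zt_def Bt_def ZC_def ti)
    have 2: "Gf \<Omega> P (\<lambda>\<omega>. (fst \<omega>, ZC t \<omega>)) = GXY (t-1)"
      unfolding GXY_def by (rule Gf_cong) (auto simp: \<Omega>_def traj_space_def Zt_def Bt_def ZC_def)
    have 3: "Gf \<Omega> P (\<lambda>\<omega>. (Bt t \<omega>, ZC t \<omega>)) = GZY t t"
      unfolding GZY_def by (rule Gf_cong) (auto simp: \<Omega>_def traj_space_def Zt_def Bt_def ZC_def ti)
    have 4: "Gf \<Omega> P (ZC t) = GZY t (t-1)"
      unfolding GZY_def ZC_def by simp
    show ?thesis unfolding cg[unfolded \<Omega>_def[symmetric]] 1 2 3 4 by simp
  qed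
  have M: "mutual_info \<Omega> P fst snd = GXY n + GY 0 - GXY 0 - GY n"
  proof -
    have 1: "Gf \<Omega> P (\<lambda>\<omega>. (fst \<omega>, snd \<omega>, ())) = GXY n"
      unfolding GXY_def by (rule Gf_cong) (auto simp: \<Omega>_def traj_space_def)
    have 2: "Gf \<Omega> P (\<lambda>\<omega>. ()) = GY 0"
      unfolding GY_def by (rule Gf_cong) auto
    have 3: "Gf \<Omega> P (\<lambda>\<omega>. (fst \<omega>, ())) = GXY 0"
      unfolding GXY_def by (rule Gf_cong) auto
    have 4: "Gf \<Omega> P (\<lambda>\<omega>. (snd \<omega>, ())) = GY n"
      unfolding GY_def by (rule Gf_cong) (auto simp: \<Omega>_def traj_space_def)
    show ?thesis unfolding mutual_info_def cg[unfolded \<Omega>_def[symmetric]] 1 2 3 4 by simp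
  qed
  have E: "cond_mi \<Omega> P (\<lambda>\<omega>. drop (t - 2) (take t (fst \<omega>))) (\<lambda>\<omega>. snd \<omega> ! (t - 1)) (\<lambda>\<omega>. take (t - 1) (snd \<omega>))
     + cond_mi \<Omega> P fst (Bt t) (ZC t) = (GXY t - GXY (t-1)) - (GY t - GY (t-1))" if "t \<in> {1..n}" for t
    using S[OF that] D[OF that] by linarith
  have "(\<Sum>t=1..n. cond_mi \<Omega> P (\<lambda>\<omega>. drop (t - 2) (take t (fst \<omega>))) (\<lambda>\<omega>. snd \<omega> ! (t - 1)) (\<lambda>\<omega>. take (t - 1) (snd \<omega>)))
     + (\<Sum>t=1..n. cond_mi \<Omega> P fst (Bt t) (ZC t))
     = (\<Sum>t=1..n. cond_mi \<Omega> P (\<lambda>\<omega>. drop (t - 2) (take t (fst \<omega>))) (\<lambda>\<omega>. snd \<omega> ! (t - 1)) (\<lambda>\<omega>. take (t - 1) (snd \<omega>))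
     + cond_mi \<Omega> P fst (Bt t) (ZC t))"
    by (rule sum.distrib[symmetric])
  also have "\<dots> = (\<Sum>t=1..n. (GXY t - GXY (t-1)) - (GY t - GY (t-1)))"
    by (rule sum.cong[OF refl E])
  also have "\<dots> = GXY n - GXY 0 - (GY n - GY 0)"
    using tele[of GXY n] tele[of GY n] by (simp only: sum_subtractf)
  finally show ?thesis using M unfolding \<Omega>_def by simp
qed



definition PZ where
  "PZ n P t z w = prob_of (traj_space n) P (\<lambda>\<eta>. Zt t \<eta> = z \<and> take (length w) (snd \<eta>) = w)"

definition Af where "Af p T n x = (\<Prod>s\<in>{1..n}. fa p T x s)"

lemma cmi_zero:
  fixes P :: "'s \<Rightarrow> real"
  assumes fin: "finite \<Omega>" and nn: "\<forall>\<omega>\<in>\<Omega>. 0 \<le> P \<omega>"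
    and ci: "\<forall>\<omega>\<in>\<Omega>. prob_of \<Omega> P (\<lambda>\<eta>. A \<eta> = A \<omega> \<and> B \<eta> = B \<omega> \<and> C \<eta> = C \<omega>) * prob_of \<Omega> P (\<lambda>\<eta>. C \<eta> = C \<omega>)
      = prob_of \<Omega> P (\<lambda>\<eta>. A \<eta> = A \<omega> \<and> C \<eta> = C \<omega>) * prob_of \<Omega> P (\<lambda>\<eta>. B \<eta> = B \<omega> \<and> C \<eta> = C \<omega>)"
  shows "cond_mi \<Omega> P A B C = 0"
  unfolding cond_mi_def
proof (rule sum.neutral, rule ballI)
  fix \<omega> assume w: "\<omega> \<in> \<Omega>"
  show "P \<omega> * ln (prob_of \<Omega> P (\<lambda>\<eta>. A \<eta> = A \<omega> \<and> B \<eta> = B \<omega> \<and> C \<eta> = C \<omega>) * prob_of \<Omega> P (\<lambda>\<eta>. C \<eta> = C \<omega>) /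
          (prob_of \<Omega> P (\<lambda>\<eta>. A \<eta> = A \<omega> \<and> C \<eta> = C \<omega>) * prob_of \<Omega> P (\<lambda>\<eta>. B \<eta> = B \<omega> \<and> C \<eta> = C \<omega>))) = 0"
  proof (cases "P \<omega> = 0")
    case True then show ?thesis by simp
  next
    case False
    then have pw: "0 < P \<omega>" using nn w by force
    have "P \<omega> \<le> prob_of \<Omega> P (\<lambda>\<eta>. A \<eta> = A \<omega> \<and> C \<eta> = C \<omega>)"
         "P \<omega> \<le> prob_of \<Omega> P (\<lambda>\<eta>. B \<eta> = B \<omega> \<and> C \<eta> = C \<omega>)"
      by (rule prob_of_ge[OF fin nn w], simp)+
    then have "prob_of \<Omega> P (\<lambda>\<eta>. A \<eta> = A \<omega> \<and> C \<eta> = C \<omega>) * prob_of \<Omega> P (\<lambda>\<eta>. B \<eta> = B \<omega> \<and> C \<eta> = C \<omega>) \<noteq> 0"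
      using pw by (metis less_le_trans mult_pos_pos less_irrefl)
    then show ?thesis using ci w by simp
  qed
qed

lemma group_fst:
  assumes fin: "finite \<Omega>" and fX: "finite X" and sub: "fst ` \<Omega> \<subseteq> X"
  shows "prob_of \<Omega> P (\<lambda>\<eta>. Q (fst \<eta>) \<and> E \<eta>) = (\<Sum>x\<in>X. if Q x then prob_of \<Omega> P (\<lambda>\<eta>. fst \<eta> = x \<and> E \<eta>) else 0)"
proof -
  have "prob_of \<Omega> P (\<lambda>\<eta>. Q (fst \<eta>) \<and> E \<eta>) = (\<Sum>x\<in>X. sum P {\<eta>. \<eta> \<in> {\<eta>\<in>\<Omega>. Q (fst \<eta>) \<and> E \<eta>} \<and> fst \<eta> = x})"
    unfolding prob_of_def by (rule sum.group[symmetric]) (use fin fX sub in auto)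
  also have "\<dots> = (\<Sum>x\<in>X. if Q x then prob_of \<Omega> P (\<lambda>\<eta>. fst \<eta> = x \<and> E \<eta>) else 0)"
  proof (intro sum.cong refl)
    fix x
    show "sum P {\<eta>. \<eta> \<in> {\<eta>\<in>\<Omega>. Q (fst \<eta>) \<and> E \<eta>} \<and> fst \<eta> = x} = (if Q x then prob_of \<Omega> P (\<lambda>\<eta>. fst \<eta> = x \<and> E \<eta>) else 0)"
    proof (cases "Q x")
      case True
      then have "{\<eta>. \<eta> \<in> {\<eta>\<in>\<Omega>. Q (fst \<eta>) \<and> E \<eta>} \<and> fst \<eta> = x} = {\<eta>\<in>\<Omega>. fst \<eta> = x \<and> E \<eta>}" by auto
      then show ?thesis using True unfolding prob_of_def by simp
    next
      case False
      then have "{\<eta>. \<eta> \<in> {\<eta>\<in>\<Omega>. Q (fst \<eta>) \<and> E \<eta>} \<and> fst \<eta> = x} = {}" by auto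
      then have s0: "sum P {\<eta>. \<eta> \<in> {\<eta>\<in>\<Omega>. Q (fst \<eta>) \<and> E \<eta>} \<and> fst \<eta> = x} = 0" by (simp only: sum.empty)
      show ?thesis unfolding if_not_P[OF False] by (rule s0)
    qed
  qed
  finally show ?thesis .
qed

lemma sum_values:
  fixes g :: "'s \<Rightarrow> 'v::finite"
  assumes fin: "finite \<Omega>"
  shows "(\<Sum>v\<in>UNIV. prob_of \<Omega> P (\<lambda>\<eta>. E \<eta> \<and> g \<eta> = v)) = prob_of \<Omega> P E"
proof -
  have "(\<Sum>v\<in>UNIV. sum P {\<eta>. \<eta> \<in> {\<eta>\<in>\<Omega>. E \<eta>} \<and> g \<eta> = v}) = sum P {\<eta>\<in>\<Omega>. E \<eta>}"
    by (rule sum.group) (use fin in auto)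
  moreover have "{\<eta>. \<eta> \<in> {\<eta>\<in>\<Omega>. E \<eta>} \<and> g \<eta> = v} = {\<eta>\<in>\<Omega>. E \<eta> \<and> g \<eta> = v}" for v by auto
  ultimately show ?thesis unfolding prob_of_def by simp
qed

lemma support_eq:
  fixes f g :: "'v::finite \<Rightarrow> real"
  assumes "prob_vec f" "prob_vec g" "\<forall>v. 0 < f v \<longrightarrow> g v = f v"
  shows "f = g"
proof -
  have s: "(\<Sum>v\<in>UNIV. g v - f v) = 0" using pv_sum[OF assms(1)] pv_sum[OF assms(2)] by (simp add: sum_subtractf)
  have nn: "\<forall>v\<in>UNIV. 0 \<le> g v - f v"
  proof
    fix v
    show "0 \<le> g v - f v"
    proof (cases "0 < f v")
      case True then show ?thesis using assms(3) by simp
    next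
      case False
      have "0 \<le> f v" using assms(1) unfolding prob_vec_def by simp
      then have "f v = 0" using False by simp
      then show ?thesis using assms(2) unfolding prob_vec_def by simp
    qed
  qed
  have "\<forall>v\<in>UNIV. g v - f v = 0" using sum_nonneg_eq_0_iff[of UNIV "\<lambda>v. g v - f v"] s nn by simp
  then show ?thesis by auto
qed

lemma fqp_tk: "1 \<le> t \<Longrightarrow> t \<le> length y \<Longrightarrow>
   fqp q t x (take t y) = fqp q (t-1) x (take (t-1) y) * q t (take t x) (take (t-1) y) (y!(t-1))"
  using fqp_snoc[of "take (t-1) y" "t-1" q x "y!(t-1)"] tk[of t y] by simp

context
  fixes p :: "'w::finite \<Rightarrow> real" and T :: "'w \<Rightarrow> 'w \<Rightarrow> real"
    and q :: "nat \<Rightarrow> 'w list \<Rightarrow> 'w list \<Rightarrow> 'w \<Rightarrow> real" and n t :: nat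
  assumes qH: "q \<in> QH" and t1: "1 \<le> t" and tn: "t \<le> n"
begin

lemma ev_abc:
  fixes \<omega> :: "'w list \<times> 'w list"
  assumes w: "\<omega> \<in> traj_space n"
  shows "prob_of (traj_space n) (joint p T q n) (\<lambda>\<eta>. fst \<eta> = fst \<omega> \<and> Bt t \<eta> = Bt t \<omega> \<and> ZC t \<eta> = ZC t \<omega>)
     = Af p T n (fst \<omega>) * fqp q t (fst \<omega>) (take t (snd \<omega>))"
proof -
  have l: "length (fst \<omega>) = n" "length (snd \<omega>) = n" using w by (auto simp: traj_space_def)
  have "prob_of (traj_space n) (joint p T q n) (\<lambda>\<eta>. fst \<eta> = fst \<omega> \<and> Bt t \<eta> = Bt t \<omega> \<and> ZC t \<eta> = ZC t \<omega>)
     = prob_of (traj_space n) (joint p T q n) (\<lambda>\<eta>. fst \<eta> = fst \<omega> \<and> take (length (take t (snd \<omega>))) (snd \<eta>) = take t (snd \<omega>))"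
  proof (rule prob_of_cong, rule ballI)
    fix \<eta> :: "'w list \<times> 'w list" assume "\<eta> \<in> traj_space n"
    then have l2: "length (snd \<eta>) = n" by (auto simp: traj_space_def)
    show "(fst \<eta> = fst \<omega> \<and> Bt t \<eta> = Bt t \<omega> \<and> ZC t \<eta> = ZC t \<omega>) =
          (fst \<eta> = fst \<omega> \<and> take (length (take t (snd \<omega>))) (snd \<eta>) = take t (snd \<omega>))"
      using tk[of t "snd \<eta>"] tk[of t "snd \<omega>"] l l2 t1 tn by (auto simp: Bt_def ZC_def Zt_def min_def)
  qed
  also have "\<dots> = Af p T n (fst \<omega>) * fqp q t (fst \<omega>) (take t (snd \<omega>))"
    using prX[OF qH l(1), of "take t (snd \<omega>)" p T] l tn by (simp add: Af_def min_def)
  finally show ?thesis .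
qed

lemma ev_ac:
  fixes \<omega> :: "'w list \<times> 'w list"
  assumes w: "\<omega> \<in> traj_space n"
  shows "prob_of (traj_space n) (joint p T q n) (\<lambda>\<eta>. fst \<eta> = fst \<omega> \<and> ZC t \<eta> = ZC t \<omega>)
     = Af p T n (fst \<omega>) * fqp q (t-1) (fst \<omega>) (take (t-1) (snd \<omega>))"
proof -
  have l: "length (fst \<omega>) = n" "length (snd \<omega>) = n" using w by (auto simp: traj_space_def)
  have lt: "length (take (t-1) (snd \<omega>)) = t-1" using l tn by simp
  have le: "length (take (t-1) (snd \<omega>)) \<le> n" using l tn by simp
  have "prob_of (traj_space n) (joint p T q n) (\<lambda>\<eta>. fst \<eta> = fst \<omega> \<and> ZC t \<eta> = ZC t \<omega>)
     = prob_of (traj_space n) (joint p T q n) (\<lambda>\<eta>. fst \<eta> = fst \<omega> \<and> take (length (take (t-1) (snd \<omega>))) (snd \<eta>) = take (t-1) (snd \<omega>))"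
  proof (rule prob_of_cong, rule ballI)
    fix \<eta> :: "'w list \<times> 'w list" assume "\<eta> \<in> traj_space n"
    show "(fst \<eta> = fst \<omega> \<and> ZC t \<eta> = ZC t \<omega>) =
          (fst \<eta> = fst \<omega> \<and> take (length (take (t-1) (snd \<omega>))) (snd \<eta>) = take (t-1) (snd \<omega>))"
      using l t1 tn by (auto simp: ZC_def Zt_def min_def)
  qed
  also have "\<dots> = (\<Prod>s\<in>{1..n}. fa p T (fst \<omega>) s) * fqp q (length (take (t-1) (snd \<omega>))) (fst \<omega>) (take (t-1) (snd \<omega>))"
    by (rule prX[OF qH l(1) le])
  also have "\<dots> = Af p T n (fst \<omega>) * fqp q (t-1) (fst \<omega>) (take (t-1) (snd \<omega>))"
    by (simp only: lt Af_def)
  finally show ?thesis .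
qed

lemma ev_c:
  fixes \<omega> :: "'w list \<times> 'w list"
  assumes w: "\<omega> \<in> traj_space n"
  shows "prob_of (traj_space n) (joint p T q n) (\<lambda>\<eta>. ZC t \<eta> = ZC t \<omega>)
     = PZ n (joint p T q n) t (Zt t \<omega>) (take (t-1) (snd \<omega>))"
proof -
  have l: "length (fst \<omega>) = n" "length (snd \<omega>) = n" using w by (auto simp: traj_space_def)
  show ?thesis unfolding PZ_def
    by (rule prob_of_cong) (use l t1 tn in \<open>auto simp: ZC_def min_def\<close>)
qed

lemma ev_bc:
  fixes \<omega> :: "'w list \<times> 'w list"
  assumes w: "\<omega> \<in> traj_space n"
  shows "prob_of (traj_space n) (joint p T q n) (\<lambda>\<eta>. Bt t \<eta> = Bt t \<omega> \<and> ZC t \<eta> = ZC t \<omega>)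
     = PZ n (joint p T q n) t (Zt t \<omega>) (take t (snd \<omega>))"
  unfolding PZ_def
proof (rule prob_of_cong, rule ballI)
  have l: "length (fst \<omega>) = n" "length (snd \<omega>) = n" using w by (auto simp: traj_space_def)
  fix \<eta> :: "'w list \<times> 'w list" assume "\<eta> \<in> traj_space n"
  then have l2: "length (snd \<eta>) = n" by (auto simp: traj_space_def)
  show "(Bt t \<eta> = Bt t \<omega> \<and> ZC t \<eta> = ZC t \<omega>) =
        (Zt t \<eta> = Zt t \<omega> \<and> take (length (take t (snd \<omega>))) (snd \<eta>) = take t (snd \<omega>))"
    using tk[of t "snd \<eta>"] tk[of t "snd \<omega>"] l l2 t1 tn by (auto simp: Bt_def ZC_def min_def)
qed

lemma PZ_group:
  fixes w z :: "'w list"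
  assumes "length w \<le> n"
  shows "PZ n (joint p T q n) t z w = (\<Sum>x\<in>{x. length x = n}. if drop (t-2) (take t x) = z
     then Af p T n x * fqp q (length w) x w else 0)"
proof -
  have fX: "finite {x::'w list. length x = n}" using finite_lists_length_eq[of "UNIV::'w set" n] by simp
  have "PZ n (joint p T q n) t z w = (\<Sum>x\<in>{x. length x = n}. if drop (t-2) (take t x) = z
     then prob_of (traj_space n) (joint p T q n) (\<lambda>\<eta>. fst \<eta> = x \<and> take (length w) (snd \<eta>) = w) else 0)"
    unfolding PZ_def Zt_def
    by (rule group_fst[OF finite_traj fX, where P="joint p T q n" and Q="\<lambda>x. drop (t-2) (take t x) = z"])
       (auto simp: traj_space_def)
  also have "\<dots> = (\<Sum>x\<in>{x. length x = n}. if drop (t-2) (take t x) = z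
     then Af p T n x * fqp q (length w) x w else 0)"
    by (intro sum.cong refl) (use prX[OF qH _ assms] in \<open>auto simp: Af_def\<close>)
  finally show ?thesis .
qed

end



lemma QS_D0:
  fixes p :: "'w::finite \<Rightarrow> real" and T :: "'w \<Rightarrow> 'w \<Rightarrow> real"
    and q :: "nat \<Rightarrow> 'w list \<Rightarrow> 'w list \<Rightarrow> 'w \<Rightarrow> real" and n t :: nat
  assumes p: "prob_vec p" and T: "markov_kernel T" and qS: "q \<in> QS" and t1: "1 \<le> t" and tn: "t \<le> n"
  shows "cond_mi (traj_space n) (joint p T q n) fst (Bt t) (ZC t) = 0"
proof -
  have qH: "q \<in> QH" using qS unfolding QS_def by simp
  have qinv: "q t (take t x') w = q t (take t x) w" if "length x = n" "length x' = n" "length w = t-1"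
     "drop (t-2) (take t x') = drop (t-2) (take t x)" for x x' w
    using qS that t1 tn unfolding QS_def by auto
  have snoc: "PZ n (joint p T q n) t (drop (t-2) (take t x)) (w@[v])
      = q t (take t x) w v * PZ n (joint p T q n) t (drop (t-2) (take t x)) w"
    if lx: "length x = n" and lw: "length w = t-1" for x w v
  proof -
    have "PZ n (joint p T q n) t (drop (t-2) (take t x)) (w@[v])
      = (\<Sum>x'\<in>{x'. length x' = n}. if drop (t-2) (take t x') = drop (t-2) (take t x)
           then Af p T n x' * fqp q (length (w@[v])) x' (w@[v]) else 0)"
      by (rule PZ_group[OF qH t1 tn]) (use lw t1 tn in simp)
    also have "\<dots> = (\<Sum>x'\<in>{x'. length x' = n}. q t (take t x) w v * (if drop (t-2) (take t x') = drop (t-2) (take t x)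
           then Af p T n x' * fqp q (length w) x' w else 0))"
    proof (intro sum.cong refl)
      fix x' :: "'w list" assume "x' \<in> {x'. length x' = n}"
      then have lx': "length x' = n" by simp
      have "fqp q (length (w@[v])) x' (w@[v]) = fqp q (length w) x' w * q t (take t x') w v"
        using fqp_snoc[of w "t-1" q x' v] lw t1 by simp
      then show "(if drop (t-2) (take t x') = drop (t-2) (take t x) then Af p T n x' * fqp q (length (w@[v])) x' (w@[v]) else 0)
         = q t (take t x) w v * (if drop (t-2) (take t x') = drop (t-2) (take t x) then Af p T n x' * fqp q (length w) x' w else 0)"
        using qinv[OF lx lx' lw] by auto
    qed
    also have "\<dots> = q t (take t x) w v * PZ n (joint p T q n) t (drop (t-2) (take t x)) w"
    proof -
      have lwn: "length w \<le> n" using lw tn by simp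
      show ?thesis unfolding PZ_group[OF qH t1 tn lwn] by (rule sum_distrib_left[symmetric])
    qed
    finally show ?thesis .
  qed
  have nn: "\<forall>\<omega>\<in>traj_space n. 0 \<le> joint p T q n \<omega>" using joint_nonneg[OF p T qH] by simp
  show ?thesis
  proof (rule cmi_zero[OF finite_traj nn], rule ballI)
    fix \<omega> :: "'w list \<times> 'w list" assume w: "\<omega> \<in> traj_space n"
    have l: "length (fst \<omega>) = n" "length (snd \<omega>) = n" using w by (auto simp: traj_space_def)
    define x where "x = fst \<omega>"
    define wv where "wv = take (t-1) (snd \<omega>)"
    define v where "v = snd \<omega> ! (t-1)"
    have lwv: "length wv = t-1" unfolding wv_def using l tn by simp
    have tt: "take t (snd \<omega>) = wv @ [v]" unfolding wv_def v_def using tk[of t "snd \<omega>"] l t1 tn by simp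
    have z: "Zt t \<omega> = drop (t-2) (take t x)" unfolding Zt_def x_def ..
    have a1: "fqp q t x (take t (snd \<omega>)) = fqp q (t-1) x wv * q t (take t x) wv v"
      unfolding wv_def v_def using fqp_tk[of t "snd \<omega>" q x] l t1 tn by simp
    show "prob_of (traj_space n) (joint p T q n) (\<lambda>\<eta>. fst \<eta> = fst \<omega> \<and> Bt t \<eta> = Bt t \<omega> \<and> ZC t \<eta> = ZC t \<omega>) *
          prob_of (traj_space n) (joint p T q n) (\<lambda>\<eta>. ZC t \<eta> = ZC t \<omega>) =
          prob_of (traj_space n) (joint p T q n) (\<lambda>\<eta>. fst \<eta> = fst \<omega> \<and> ZC t \<eta> = ZC t \<omega>) *
          prob_of (traj_space n) (joint p T q n) (\<lambda>\<eta>. Bt t \<eta> = Bt t \<omega> \<and> ZC t \<eta> = ZC t \<omega>)"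
      unfolding ev_abc[OF qH t1 tn w] ev_c[OF qH t1 tn w] ev_ac[OF qH t1 tn w] ev_bc[OF qH t1 tn w]
      unfolding x_def[symmetric] wv_def[symmetric] unfolding a1 unfolding tt z snoc[OF l(1)[folded x_def] lwv]
      by simp
  qed
qed



lemma constr:
  fixes p :: "'w::finite \<Rightarrow> real" and T :: "'w \<Rightarrow> 'w \<Rightarrow> real"
    and q :: "nat \<Rightarrow> 'w list \<Rightarrow> 'w list \<Rightarrow> 'w \<Rightarrow> real" and n :: nat
  assumes p: "prob_vec p" and T: "markov_kernel T" and qH: "q \<in> QH"
    and ci: "\<forall>t\<in>{1..n}. \<forall>\<omega>\<in>traj_space n. 0 < joint p T q n \<omega> \<longrightarrow>
      prob_of (traj_space n) (joint p T q n) (\<lambda>\<eta>. fst \<eta> = fst \<omega> \<and> Bt t \<eta> = Bt t \<omega> \<and> ZC t \<eta> = ZC t \<omega>) *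
      prob_of (traj_space n) (joint p T q n) (\<lambda>\<eta>. ZC t \<eta> = ZC t \<omega>) =
      prob_of (traj_space n) (joint p T q n) (\<lambda>\<eta>. fst \<eta> = fst \<omega> \<and> ZC t \<eta> = ZC t \<omega>) *
      prob_of (traj_space n) (joint p T q n) (\<lambda>\<eta>. Bt t \<eta> = Bt t \<omega> \<and> ZC t \<eta> = ZC t \<omega>)"
  shows "\<exists>q'\<in>QS. \<forall>\<omega>. joint p T q n \<omega> = joint p T q' n \<omega>"
proof -
  have nn: "\<forall>\<omega>\<in>traj_space n. 0 \<le> joint p T q n \<omega>" using joint_nonneg[OF p T qH] by simp
  define den where "den t xs ys = PZ n (joint p T q n) t (drop (t-2) xs) ys" for t and xs ys :: "'w list"
  define num where "num t xs ys v = PZ n (joint p T q n) t (drop (t-2) xs) (ys@[v])" for t and xs ys :: "'w list" and v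
  define q' where "q' t xs ys v = (if 1 \<le> t \<and> t \<le> n \<and> length xs = t \<and> length ys = t-1 \<and> den t xs ys \<noteq> 0
     then num t xs ys v / den t xs ys else 1 / real (card (UNIV :: 'w set)))" for t xs ys v
  have num_nn: "0 \<le> num t xs ys v" for t xs ys v
    unfolding num_def PZ_def using nn by (rule prob_of_nonneg)
  have den_nn: "0 \<le> den t xs ys" for t xs ys
    unfolding den_def PZ_def using nn by (rule prob_of_nonneg)
  have sumnum: "(\<Sum>v\<in>UNIV. num t xs ys v) = den t xs ys" if "1 \<le> t" "t \<le> n" "length ys = t-1" for t xs ys
  proof -
    have "num t xs ys v = prob_of (traj_space n) (joint p T q n)
       (\<lambda>\<eta>. (Zt t \<eta> = drop (t-2) xs \<and> take (length ys) (snd \<eta>) = ys) \<and> snd \<eta> ! (t-1) = v)" for v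
      unfolding num_def PZ_def
    proof (rule prob_of_cong, rule ballI)
      fix \<eta> :: "'w list \<times> 'w list" assume "\<eta> \<in> traj_space n"
      then have l: "length (snd \<eta>) = n" by (cases \<eta>) (auto simp: traj_space_def)
      show "(Zt t \<eta> = drop (t-2) xs \<and> take (length (ys@[v])) (snd \<eta>) = ys@[v]) =
            ((Zt t \<eta> = drop (t-2) xs \<and> take (length ys) (snd \<eta>) = ys) \<and> snd \<eta> ! (t-1) = v)"
        using tk[of t "snd \<eta>"] that l by auto
    qed
    then have "(\<Sum>v\<in>UNIV. num t xs ys v) = (\<Sum>v\<in>UNIV. prob_of (traj_space n) (joint p T q n)
       (\<lambda>\<eta>. (Zt t \<eta> = drop (t-2) xs \<and> take (length ys) (snd \<eta>) = ys) \<and> snd \<eta> ! (t-1) = v))" by simp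
    also have "\<dots> = den t xs ys" unfolding den_def PZ_def by (rule sum_values[OF finite_traj])
    finally show ?thesis .
  qed
  have q'H: "q' \<in> QH"
    unfolding QH_def
  proof (intro CollectI allI impI)
    fix t :: nat and xs ys :: "'w list"
    assume a: "1 \<le> t" "length xs = t" "length ys = t - 1"
    show "prob_vec (q' t xs ys)"
    proof (cases "1 \<le> t \<and> t \<le> n \<and> length xs = t \<and> length ys = t-1 \<and> den t xs ys \<noteq> 0")
      case True
      then have "q' t xs ys = (\<lambda>v. num t xs ys v / den t xs ys)" unfolding q'_def by auto
      moreover have "(\<Sum>v\<in>UNIV. num t xs ys v / den t xs ys) = 1"
        using True sumnum[of t ys xs] by (simp add: sum_divide_distrib[symmetric])
      ultimately show ?thesis unfolding prob_vec_def using num_nn den_nn by simp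
    next
      case False
      then have "q' t xs ys = (\<lambda>v. 1 / real (card (UNIV :: 'w set)))" unfolding q'_def by auto
      then show ?thesis unfolding prob_vec_def by simp
    qed
  qed
  have q'S: "q' \<in> QS"
    unfolding QS_def using q'H
    by (auto simp: q'_def den_def num_def fun_eq_iff)
  have key: "q t (take t x) (take (t-1) y) = q' t (take t x) (take (t-1) y)"
    if t: "1 \<le> t" "t \<le> n" and lx: "length x = n" and ly: "length y = n"
      and pos: "0 < pre p T q (t-1) x y * fa p T x t" for t x y
  proof -
    define xt where "xt = take t x"
    define w where "w = take (t-1) y"
    have lxt: "length xt = t" and lw: "length w = t-1" unfolding xt_def w_def using t lx ly by auto
    have pvq: "prob_vec (q t xt w)" using qH lxt lw t unfolding QH_def by auto
    have pvq': "prob_vec (q' t xt w)" using q'H lxt lw t unfolding QH_def by auto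
    have "q t xt w = q' t xt w"
    proof (rule support_eq[OF pvq pvq'], intro allI impI)
      fix v assume fv: "0 < q t xt w v"
      obtain k where k: "t = Suc k" using t by (cases t) auto
      have "pre p T q k xt (w@[v]) = pre p T q k x y"
        by (rule pre_cong) (use k lxt lw lx ly t in \<open>auto simp: xt_def w_def\<close>)
      moreover have "fa p T xt (Suc k) = fa p T x (Suc k)"
        by (rule fa_cong) (use k lxt lx t in \<open>auto simp: xt_def\<close>)
      moreover have "fq q xt (w@[v]) (Suc k) = q t xt w v"
        unfolding fq_def using k lxt lw by (simp add: xt_def nth_append)
      ultimately have "pre p T q t xt (w@[v]) = pre p T q (t-1) x y * fa p T x t * q t xt w v"
        using k by (simp add: pre_Suc)
      then have "0 < pre p T q t xt (w@[v])" using pos fv by simp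
      then obtain x' y' where xy: "length x' = n" "length y' = n" "take t x' = xt" "take t y' = w@[v]"
        "0 < pre p T q n x' y'"
        using ext_pos[OF p T qH t, of xt "w@[v]"] lxt lw t by auto
      define \<omega> where "\<omega> = (x', y')"
      have w\<Omega>: "\<omega> \<in> traj_space n" unfolding \<omega>_def traj_space_def using xy by simp
      have jp: "0 < joint p T q n \<omega>" unfolding \<omega>_def using xy by (simp add: joint_eq)
      have tw: "take (t-1) y' = w"
      proof -
        have "take (t-1) y' = take (t-1) (take t y')" by (simp add: min_def)
        also have "\<dots> = w" using xy(4) lw by simp
        finally show ?thesis .
      qed
      have yv: "y' ! (t-1) = v"
      proof -
        have "y' ! (t-1) = take t y' ! (t-1)" using t by simp
        then show ?thesis using xy(4) lw by (simp add: nth_append)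
      qed
      have zt: "Zt t \<omega> = drop (t-2) xt" unfolding Zt_def \<omega>_def using xy by simp
      have tyv: "take t y' = w @ [v]" using xy by simp
      have c1: "prob_of (traj_space n) (joint p T q n) (\<lambda>\<eta>. fst \<eta> = fst \<omega> \<and> Bt t \<eta> = Bt t \<omega> \<and> ZC t \<eta> = ZC t \<omega>)
          = Af p T n x' * fqp q (t-1) x' w * q t xt w v"
        unfolding ev_abc[OF qH t w\<Omega>] using fqp_tk[of t y' q x'] xy t tw yv by (simp add: \<omega>_def)
      have c2: "prob_of (traj_space n) (joint p T q n) (\<lambda>\<eta>. fst \<eta> = fst \<omega> \<and> ZC t \<eta> = ZC t \<omega>)
          = Af p T n x' * fqp q (t-1) x' w"
        unfolding ev_ac[OF qH t w\<Omega>] using tw by (simp add: \<omega>_def)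
      have c3: "prob_of (traj_space n) (joint p T q n) (\<lambda>\<eta>. ZC t \<eta> = ZC t \<omega>) = den t xt w"
        unfolding ev_c[OF qH t w\<Omega>] den_def zt using tw by (simp add: \<omega>_def)
      have c4: "prob_of (traj_space n) (joint p T q n) (\<lambda>\<eta>. Bt t \<eta> = Bt t \<omega> \<and> ZC t \<eta> = ZC t \<omega>) = num t xt w v"
        unfolding ev_bc[OF qH t w\<Omega>] num_def zt using tyv by (simp add: \<omega>_def)
      have g2: "joint p T q n \<omega> \<le> prob_of (traj_space n) (joint p T q n) (\<lambda>\<eta>. fst \<eta> = fst \<omega> \<and> ZC t \<eta> = ZC t \<omega>)"
        by (rule prob_of_ge[OF finite_traj nn w\<Omega>]) simp
      have g3: "joint p T q n \<omega> \<le> prob_of (traj_space n) (joint p T q n) (\<lambda>\<eta>. ZC t \<eta> = ZC t \<omega>)"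
        by (rule prob_of_ge[OF finite_traj nn w\<Omega>]) simp
      have A0: "0 < Af p T n x' * fqp q (t-1) x' w" using g2 jp c2 by simp
      have D0: "0 < den t xt w" using g3 jp c3 by simp
      have "Af p T n x' * fqp q (t-1) x' w * q t xt w v * den t xt w = Af p T n x' * fqp q (t-1) x' w * num t xt w v"
        using ci t w\<Omega> jp c1 c2 c3 c4 by force
      moreover have "Af p T n x' \<noteq> 0" "fqp q (t-1) x' w \<noteq> 0" using A0 by auto
      ultimately have "q t xt w v * den t xt w = num t xt w v" by (simp add: mult.assoc)
      then have "q t xt w v = num t xt w v / den t xt w" using D0 by (simp add: field_simps)
      then show "q' t xt w v = q t xt w v" unfolding q'_def using D0 t lxt lw by simp
    qed
    then show ?thesis unfolding xt_def w_def .
  qed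
  have preq: "pre p T q k x y = pre p T q' k x y" if "length x = n" "length y = n" "k \<le> n" for k x y
    using that(3)
  proof (induction k)
    case 0 then show ?case by (simp add: pre_def)
  next
    case (Suc k)
    then have IH: "pre p T q k x y = pre p T q' k x y" by simp
    show ?case
    proof (cases "pre p T q k x y * fa p T x (Suc k) = 0")
      case True
      have "pre p T q (Suc k) x y = (pre p T q k x y * fa p T x (Suc k)) * fq q x y (Suc k)"
        by (simp add: pre_Suc mult.assoc)
      moreover have "pre p T q' (Suc k) x y = (pre p T q k x y * fa p T x (Suc k)) * fq q' x y (Suc k)"
        by (simp add: pre_Suc mult.assoc IH)
      ultimately show ?thesis using True by simp
    next
      case False
      have "0 \<le> pre p T q k x y * fa p T x (Suc k)"
        using pre_nonneg[OF p T qH] fa_nonneg[OF p T] that Suc.prems by simp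
      then have "0 < pre p T q k x y * fa p T x (Suc k)" using False by (simp only: less_le) simp
      then have "0 < pre p T q (Suc k - 1) x y * fa p T x (Suc k)" by simp
      then have "q (Suc k) (take (Suc k) x) (take (Suc k - 1) y) = q' (Suc k) (take (Suc k) x) (take (Suc k - 1) y)"
        using key[of "Suc k" x y] Suc.prems that by simp
      then have "fq q x y (Suc k) = fq q' x y (Suc k)" unfolding fq_def by simp
      then show ?thesis using IH by (simp add: pre_Suc)
    qed
  qed
  have "\<forall>\<omega>. joint p T q n \<omega> = joint p T q' n \<omega>"
  proof
    fix \<omega> :: "'w list \<times> 'w list"
    obtain x y where "\<omega> = (x,y)" by (cases \<omega>)
    then show "joint p T q n \<omega> = joint p T q' n \<omega>" using preq[of x y n] by (simp add: joint_eq)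
  qed
  then show ?thesis using q'S by blast
qed



theorem lemma1:
  fixes p :: "'w::finite \<Rightarrow> real" and T :: "'w \<Rightarrow> 'w \<Rightarrow> real"
    and q :: "nat \<Rightarrow> 'w list \<Rightarrow> 'w list \<Rightarrow> 'w \<Rightarrow> real" and n :: nat
  assumes "prob_vec p" and "markov_kernel T" and "q \<in> QH" and "1 \<le> n"
  shows "mutual_info (traj_space n) (joint p T q n) fst snd
           \<ge> (\<Sum>t=1..n. cond_mi (traj_space n) (joint p T q n)
                 (\<lambda>\<omega>. drop (t - 2) (take t (fst \<omega>)))
                 (\<lambda>\<omega>. snd \<omega> ! (t - 1))
                 (\<lambda>\<omega>. take (t - 1) (snd \<omega>)))
       \<and> (mutual_info (traj_space n) (joint p T q n) fst snd
           = (\<Sum>t=1..n. cond_mi (traj_space n) (joint p T q n)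
                 (\<lambda>\<omega>. drop (t - 2) (take t (fst \<omega>)))
                 (\<lambda>\<omega>. snd \<omega> ! (t - 1))
                 (\<lambda>\<omega>. take (t - 1) (snd \<omega>)))
          \<longleftrightarrow> (\<exists>q'\<in>QS. \<forall>\<omega>. joint p T q n \<omega> = joint p T q' n \<omega>))"
proof -
  note p = assms(1) and T = assms(2) and qH = assms(3)
  have nn: "\<forall>\<omega>\<in>traj_space n. 0 \<le> joint p T q n \<omega>" using joint_nonneg[OF p T qH] by simp
  note dec = mi_decomp[OF nn finite_traj]
  have Dnn: "0 \<le> cond_mi (traj_space n) (joint p T q n) fst (Bt t) (ZC t)" for t
    using cmi_gibbs[OF finite_traj nn, of fst "Bt t" "ZC t"] by blast
  have Ds: "0 \<le> (\<Sum>t=1..n. cond_mi (traj_space n) (joint p T q n) fst (Bt t) (ZC t))"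
    by (intro sum_nonneg Dnn)
  have part2: "(\<Sum>t=1..n. cond_mi (traj_space n) (joint p T q n) fst (Bt t) (ZC t)) = 0
      \<longleftrightarrow> (\<exists>q'\<in>QS. \<forall>\<omega>. joint p T q n \<omega> = joint p T q' n \<omega>)"
  proof
    assume z: "(\<Sum>t=1..n. cond_mi (traj_space n) (joint p T q n) fst (Bt t) (ZC t)) = 0"
    have "\<forall>t\<in>{1..n}. cond_mi (traj_space n) (joint p T q n) fst (Bt t) (ZC t) = 0"
      using sum_nonneg_eq_0_iff[of "{1..n}" "\<lambda>t. cond_mi (traj_space n) (joint p T q n) fst (Bt t) (ZC t)"] z Dnn
      by simp
    then have ci: "\<forall>t\<in>{1..n}. \<forall>\<omega>\<in>traj_space n. 0 < joint p T q n \<omega> \<longrightarrow>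
      prob_of (traj_space n) (joint p T q n) (\<lambda>\<eta>. fst \<eta> = fst \<omega> \<and> Bt t \<eta> = Bt t \<omega> \<and> ZC t \<eta> = ZC t \<omega>) *
      prob_of (traj_space n) (joint p T q n) (\<lambda>\<eta>. ZC t \<eta> = ZC t \<omega>) =
      prob_of (traj_space n) (joint p T q n) (\<lambda>\<eta>. fst \<eta> = fst \<omega> \<and> ZC t \<eta> = ZC t \<omega>) *
      prob_of (traj_space n) (joint p T q n) (\<lambda>\<eta>. Bt t \<eta> = Bt t \<omega> \<and> ZC t \<eta> = ZC t \<omega>)"
      using cmi_gibbs[OF finite_traj nn] by blast
    show "\<exists>q'\<in>QS. \<forall>\<omega>. joint p T q n \<omega> = joint p T q' n \<omega>"
      by (rule constr[OF p T qH ci])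
  next
    assume "\<exists>q'\<in>QS. \<forall>\<omega>. joint p T q n \<omega> = joint p T q' n \<omega>"
    then obtain q' where q'S: "q' \<in> QS" and eq: "\<forall>\<omega>. joint p T q n \<omega> = joint p T q' n \<omega>" by blast
    have je: "joint p T q n = joint p T q' n" using eq by blast
    have "cond_mi (traj_space n) (joint p T q n) fst (Bt t) (ZC t) = 0" if "t \<in> {1..n}" for t
      unfolding je using QS_D0[OF p T q'S, of t n] that by simp
    then show "(\<Sum>t=1..n. cond_mi (traj_space n) (joint p T q n) fst (Bt t) (ZC t)) = 0" by simp
  qed
  show ?thesis using dec Ds part2 by linarith
qed

end
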